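(* For every max game $\mathcal R$, every sequence of greedy moves starting from an arbitrary routing is finite and terminates at a Nash-routing (so Nash-routings exist), and the price of stability is $PoS=1$, i.e. there is a Nash-routing whose social cost equals the minimum social cost over all routings.
   Context: A routing game is a tuple $\mathcal R=(\mathbf N,G,\mathcal P)$: players $\mathbf N=\{1,\dots,N\}$ ($N\ge1$), a finite graph $G=(V,E)$, and for each player $i$ a nonempty finite set $\mathcal P_i$ of paths in $G$ from a source $u_i$ to a destination $v_i$. A routing is $\mathbf p=[p_1,\dots,p_N]$ with $p_i\in\mathcal P_i$; $(p_i';\mathbf p_{-i})$ denotes the routing obtained by replacing $p_i$ with $p_i'$. $C_e(\mathbf p)$ is the number of players $j$ with $e\in p_j$; $C_i(\mathbf p)=\max_{e\in p_i}C_e(\mathbf p)$; $D_i(\mathbf p)=|p_i|$ (number of edges); $C(\mathbf p)=\max_{e}C_e(\mathbf p)$; $D(\mathbf p)=\max_i|p_i|$. A max game has player cost $pc_i(\mathbf p)=\max(C_i(\mathbf p),D_i(\mathbf p))$ and social cost $SC(\mathbf p)=\max(C(\mathbf p),D(\mathbf p))$. A greedy move by player $i$ takes $\mathbf p$ to $(p_i';\mathbf p_{-i})$ for some $p_i'\in\mathcal P_i$ with strictly smaller $pc_i$. A Nash-routing is a routing $\mathbf p$ with $pc_i(\mathbf p)\le pc_i(p_i';\mathbf p_{-i})$ for all $i$ and all $p_i'\in\mathcal P_i$. With $SC^*$ the minimum social cost over all routings and $\mathbf P$ the set of Nash-routings, $PoS=\inf_{\mathbf p\in\mathbf P}SC(\mathbf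 p)/SC^*$. *)

theory Defs
  imports Main
begin

definition finite_graph :: "'v set \<Rightarrow> ('v \<times> 'v) set \<Rightarrow> bool" where
  "finite_graph V E \<longleftrightarrow> finite V \<and> E \<subseteq> V \<times> V"

definition path_edges :: "'v list \<Rightarrow> ('v \<times> 'v) set" where
  "path_edges xs = set (zip xs (tl xs))"

definition path_len :: "'v list \<Rightarrow> nat" where
  "path_len xs = length xs - 1"

definition is_path :: "'v set \<Rightarrow> ('v \<times> 'v) set \<Rightarrow> 'v \<Rightarrow> 'v \<Rightarrow> 'v list \<Rightarrow> bool" where
  "is_path V E u v xs \<longleftrightarrow> xs \<noteq> [] \<and> hd xs = u \<and> last xs = v \<and> distinct xs
     \<and> set xs \<subseteq> V \<and> path_edges xs \<subseteq> E"

definition routing_game ::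
  "'v set \<Rightarrow> ('v \<times> 'v) set \<Rightarrow> nat \<Rightarrow> (nat \<Rightarrow> 'v) \<Rightarrow> (nat \<Rightarrow> 'v) \<Rightarrow> (nat \<Rightarrow> 'v list set) \<Rightarrow> bool" where
  "routing_game V E N src dst P \<longleftrightarrow> N \<ge> 1 \<and> finite_graph V E \<and>
     (\<forall>i\<in>{1..N}. finite (P i) \<and> P i \<noteq> {} \<and> (\<forall>p\<in>P i. is_path V E (src i) (dst i) p))"

definition is_routing :: "nat \<Rightarrow> (nat \<Rightarrow> 'v list set) \<Rightarrow> (nat \<Rightarrow> 'v list) \<Rightarrow> bool" where
  "is_routing N P p \<longleftrightarrow> (\<forall>i\<in>{1..N}. p i \<in> P i)"

definition edge_cong :: "nat \<Rightarrow> (nat \<Rightarrow> 'v list) \<Rightarrow> ('v \<times> 'v) \<Rightarrow> nat" where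
  "edge_cong N p e = card {j \<in> {1..N}. e \<in> path_edges (p j)}"

(* C_i(p) (0 for a path without edges) *)
definition player_cong :: "nat \<Rightarrow> (nat \<Rightarrow> 'v list) \<Rightarrow> nat \<Rightarrow> nat" where
  "player_cong N p i = Max (insert 0 (edge_cong N p ` path_edges (p i)))"

definition player_cost :: "nat \<Rightarrow> (nat \<Rightarrow> 'v list) \<Rightarrow> nat \<Rightarrow> nat" where
  "player_cost N p i = max (player_cong N p i) (path_len (p i))"

definition congestion :: "('v \<times> 'v) set \<Rightarrow> nat \<Rightarrow> (nat \<Rightarrow> 'v list) \<Rightarrow> nat" where
  "congestion E N p = Max (insert 0 (edge_cong N p ` E))"

definition dilation :: "nat \<Rightarrow> (nat \<Rightarrow> 'v list) \<Rightarrow> nat" where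
  "dilation N p = Max (insert 0 ((\<lambda>i. path_len (p i)) ` {1..N}))"

definition social_cost :: "('v \<times> 'v) set \<Rightarrow> nat \<Rightarrow> (nat \<Rightarrow> 'v list) \<Rightarrow> nat" where
  "social_cost E N p = max (congestion E N p) (dilation N p)"

definition greedy_move ::
  "nat \<Rightarrow> (nat \<Rightarrow> 'v list set) \<Rightarrow> (nat \<Rightarrow> 'v list) \<Rightarrow> (nat \<Rightarrow> 'v list) \<Rightarrow> bool" where
  "greedy_move N P p q \<longleftrightarrow> (\<exists>i\<in>{1..N}. \<exists>p'\<in>P i.
       q = p(i := p') \<and> player_cost N q i < player_cost N p i)"

definition nash_routing :: "nat \<Rightarrow> (nat \<Rightarrow> 'v list set) \<Rightarrow> (nat \<Rightarrow> 'v list) \<Rightarrow> bool" where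
  "nash_routing N P p \<longleftrightarrow> is_routing N P p \<and>
     (\<forall>i\<in>{1..N}. \<forall>p'\<in>P i. player_cost N p i \<le> player_cost N (p(i := p')) i)"

end

theory Submission
  imports Defs "HOL-Library.Multiset_Order"
begin

definition val :: "nat \<Rightarrow> (nat \<Rightarrow> 'v list) \<Rightarrow> ('v \<times> 'v) + nat \<Rightarrow> nat" where
  "val N p x = (case x of Inl e \<Rightarrow> edge_cong N p e | Inr j \<Rightarrow> path_len (p j))"

definition items :: "('v \<times> 'v) set \<Rightarrow> nat \<Rightarrow> (('v \<times> 'v) + nat) set" where
  "items E N = Inl ` E \<union> Inr ` {1..N}"

definition pot :: "('v \<times> 'v) set \<Rightarrow> nat \<Rightarrow> (nat \<Rightarrow> 'v list) \<Rightarrow> nat multiset" where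
  "pot E N p = image_mset (val N p) (mset_set (items E N))"

lemma count_img: "finite A \<Longrightarrow> count (image_mset f (mset_set A)) y = card {x\<in>A. f x = y}"
  by (simp add: count_image_mset' Collect_conj_eq Int_commute) (metis (mono_tags, lifting) Collect_cong)

lemma mset_decr:
  fixes f g :: "'a \<Rightarrow> nat"
  assumes fin: "finite A"
    and ch: "\<forall>x\<in>A. g x \<noteq> f x \<longrightarrow> g x < c"
    and ex: "\<exists>x\<in>A. f x = c \<and> g x \<noteq> f x"
  shows "image_mset g (mset_set A) < image_mset f (mset_set A)"
proof -
  have sub: "{x\<in>A. g x = c} \<subset> {x\<in>A. f x = c}"
    using ch ex by force
  have cc: "card {x\<in>A. g x = c} < card {x\<in>A. f x = c}"
    using sub fin by (simp add: psubset_card_mono)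
  show ?thesis
    unfolding less_multiset\<^sub>H\<^sub>O
  proof (intro conjI allI impI)
    show "image_mset g (mset_set A) \<noteq> image_mset f (mset_set A)"
      using cc fin count_img[of A g c] count_img[of A f c] by auto
  next
    fix y assume "count (image_mset f (mset_set A)) y < count (image_mset g (mset_set A)) y"
    hence "card {x\<in>A. f x = y} < card {x\<in>A. g x = y}" using fin by (simp add: count_img)
    moreover have "finite {x\<in>A. f x = y}" using fin by simp
    ultimately have "\<not> {x\<in>A. g x = y} \<subseteq> {x\<in>A. f x = y}"
      using card_mono leD by metis
    then obtain x where "x \<in> A" "g x = y" "f x \<noteq> y" by blast
    hence "y < c" using ch by auto
    thus "\<exists>x>y. count (image_mset g (mset_set A)) x < count (image_mset f (mset_set A)) x"
      using cc fin by (auto simp: count_img)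
  qed
qed

lemma fin_edges: "finite (path_edges xs)"
  by (simp add: path_edges_def)

lemma cong_le_pc: "e \<in> path_edges (p i) \<Longrightarrow> edge_cong N p e \<le> player_cong N p i"
  unfolding player_cong_def by (rule Max_ge) (auto simp: fin_edges)

lemma game_finE: "routing_game V E N src dst P \<Longrightarrow> finite E"
  unfolding routing_game_def finite_graph_def
  by (meson finite_SigmaI finite_subset)

lemma game_edges: "routing_game V E N src dst P \<Longrightarrow> i \<in> {1..N} \<Longrightarrow> x \<in> P i \<Longrightarrow> path_edges x \<subseteq> E"
  unfolding routing_game_def is_path_def by blast

lemma cong_upd:
  assumes i: "i \<in> {1..N}"
  shows "{j\<in>{1..N}. e \<in> path_edges ((p(i:=p')) j)} =
     ({j\<in>{1..N}. e \<in> path_edges (p j)} - {i}) \<union> (if e \<in> path_edges p' then {i} else {})"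
  using i by auto

lemma move_lemma:
  assumes i: "i \<in> {1..N}" and q: "q = p(i:=p')"
    and lt: "player_cost N q i < player_cost N p i"
  shows "\<forall>x. val N q x \<noteq> val N p x \<longrightarrow> val N q x < player_cost N p i"
    and "\<And>e. e \<in> path_edges (p i) \<Longrightarrow> edge_cong N q e < player_cost N p i"
proof -
  let ?c = "player_cost N p i"
  have L1: "edge_cong N q e < ?c" if "e \<in> path_edges p'" for e
  proof -
    have "e \<in> path_edges (q i)" using that q by simp
    hence "edge_cong N q e \<le> player_cong N q i" by (rule cong_le_pc)
    thus ?thesis using lt unfolding player_cost_def by linarith
  qed
  have L2: "edge_cong N q e < edge_cong N p e" if "e \<notin> path_edges p'" "e \<in> path_edges (p i)" for e
  proof -
    have "{j\<in>{1..N}. e \<in> path_edges (q j)} = {j\<in>{1..N}. e \<in> path_edges (p j)} - {i}"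
      using cong_upd[OF i, of e p p'] that q by simp
    moreover have "i \<in> {j\<in>{1..N}. e \<in> path_edges (p j)}" using i that by simp
    ultimately show ?thesis unfolding edge_cong_def
      by (metis (no_types, lifting) card_Diff1_less finite_atLeastAtMost finite_subset mem_Collect_eq subsetI)
  qed
  have L3: "edge_cong N q e = edge_cong N p e" if "e \<notin> path_edges p'" "e \<notin> path_edges (p i)" for e
  proof -
    have "{j\<in>{1..N}. e \<in> path_edges (q j)} = {j\<in>{1..N}. e \<in> path_edges (p j)}"
      using cong_upd[OF i, of e p p'] that q by auto
    thus ?thesis unfolding edge_cong_def by simp
  qed
  have pcp: "edge_cong N p e \<le> ?c" if "e \<in> path_edges (p i)" for e
    using cong_le_pc[of e p i N] that unfolding player_cost_def by linarith
  show E: "\<And>e. e \<in> path_edges (p i) \<Longrightarrow> edge_cong N q e < ?c"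
    using L1 L2 pcp by (meson order_less_le_trans)
  show "\<forall>x. val N q x \<noteq> val N p x \<longrightarrow> val N q x < ?c"
  proof (intro allI impI)
    fix x assume ne: "val N q x \<noteq> val N p x"
    show "val N q x < ?c"
    proof (cases x)
      case (Inl e)
      then have ne': "edge_cong N q e \<noteq> edge_cong N p e" using ne unfolding val_def by simp
      have "edge_cong N q e < ?c"
      proof (cases "e \<in> path_edges p'")
        case True then show ?thesis using L1 by blast
      next
        case False
        then have "e \<in> path_edges (p i)" using L3 ne' by blast
        then show ?thesis using E by blast
      qed
      then show ?thesis using Inl unfolding val_def by simp
    next
      case (Inr j)
      then have "j = i" using ne q unfolding val_def by (auto split: if_splits)
      then show ?thesis using lt Inr q unfolding val_def player_cost_def by auto
    qed
  qed
qed

lemma move_ex: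
  assumes G: "routing_game V E N src dst P" and R: "is_routing N P p"
    and i: "i \<in> {1..N}" and q: "q = p(i:=p')"
    and lt: "player_cost N q i < player_cost N p i"
  shows "\<exists>x\<in>items E N. val N p x = player_cost N p i \<and> val N q x \<noteq> val N p x"
proof -
  let ?c = "player_cost N p i"
  note ML1 = move_lemma(1)[OF i q lt] and ML2 = move_lemma(2)[OF i q lt]
  show ?thesis
  proof (cases "path_len (p i) = ?c")
    case True
    have "val N p (Inr i) = ?c" using True by (simp add: val_def)
    moreover have "val N q (Inr i) \<noteq> val N p (Inr i)"
      using lt True q unfolding val_def player_cost_def by auto
    moreover have "Inr i \<in> items E N" using i by (simp add: items_def)
    ultimately show ?thesis by blast
  next
    case False
    hence pc: "player_cong N p i = ?c" unfolding player_cost_def by auto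
    have pos: "?c > 0" using lt by linarith
    let ?S = "edge_cong N p ` path_edges (p i)"
    have "Max (insert 0 ?S) \<in> insert 0 ?S" by (rule Max_in) (auto simp: fin_edges)
    hence "?c \<in> ?S" using pc pos unfolding player_cong_def by auto
    then obtain e where e: "e \<in> path_edges (p i)" "edge_cong N p e = ?c" by (metis imageE)
    have "e \<in> E" using game_edges[OF G i] R i e unfolding is_routing_def by blast
    hence "Inl e \<in> items E N" by (simp add: items_def)
    moreover have "edge_cong N q e < ?c" using ML2 e by blast
    ultimately show ?thesis using e unfolding val_def by force
  qed
qed

lemma move_pot:
  assumes G: "routing_game V E N src dst P" and R: "is_routing N P p"
    and mv: "greedy_move N P p q"
  shows "pot E N q < pot E N p" and "is_routing N P q"
    and "social_cost E N q \<le> social_cost E N p"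
proof -
  obtain i p' where i: "i \<in> {1..N}" and p': "p' \<in> P i" and q: "q = p(i:=p')"
    and lt: "player_cost N q i < player_cost N p i"
    using mv unfolding greedy_move_def by blast
  let ?c = "player_cost N p i"
  have finI: "finite (items E N)" using game_finE[OF G] by (simp add: items_def)
  note ML1 = move_lemma(1)[OF i q lt]
  show "pot E N q < pot E N p" unfolding pot_def
    by (rule mset_decr[OF finI, of _ _ ?c]) (use ML1 move_ex[OF G R i q lt] in auto)
  show "is_routing N P q" using R p' q unfolding is_routing_def by auto
  have finE: "finite E" using game_finE[OF G] .
  have edgesE: "path_edges (p i) \<subseteq> E" using game_edges[OF G i] R i unfolding is_routing_def by blast
  have c1: "player_cong N p i \<le> congestion E N p"
    unfolding player_cong_def congestion_def
    by (rule Max_mono) (use edgesE finE in auto)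
  have c2: "path_len (p i) \<le> dilation N p"
    unfolding dilation_def by (rule Max_ge) (use i in auto)
  have cle: "?c \<le> social_cost E N p" using c1 c2 unfolding player_cost_def social_cost_def by auto
  have A: "congestion E N q \<le> social_cost E N p"
    unfolding congestion_def
  proof (rule Max.boundedI)
    show "finite (insert 0 (edge_cong N q ` E))" using finE by simp
  next
    fix a assume "a \<in> insert 0 (edge_cong N q ` E)"
    then consider "a = 0" | e where "e \<in> E" "a = edge_cong N q e" by blast
    then show "a \<le> social_cost E N p"
    proof cases
      case 2
      show ?thesis
      proof (cases "edge_cong N q e = edge_cong N p e")
        case True
        have "edge_cong N p e \<le> congestion E N p" unfolding congestion_def
          by (rule Max_ge) (use finE 2 in auto)
        then show ?thesis using True 2 unfolding social_cost_def by auto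
      next
        case False
        then show ?thesis using ML1[rule_format, of "Inl e"] cle 2 unfolding val_def by auto
      qed
    qed simp
  qed simp
  have B: "dilation N q \<le> social_cost E N p"
    unfolding dilation_def
  proof (rule Max.boundedI)
    fix a assume "a \<in> insert 0 ((\<lambda>i. path_len (q i)) ` {1..N})"
    then consider "a = 0" | j where "j \<in> {1..N}" "a = path_len (q j)" by blast
    then show "a \<le> social_cost E N p"
    proof cases
      case 2
      show ?thesis
      proof (cases "path_len (q j) = path_len (p j)")
        case True
        have "path_len (p j) \<le> dilation N p" unfolding dilation_def
          by (rule Max_ge) (use 2 in auto)
        then show ?thesis using True 2 unfolding social_cost_def by auto
      next
        case False
        then show ?thesis using ML1[rule_format, of "Inr j"] cle 2 unfolding val_def by auto
      qed
    qed simp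
  qed auto
  show "social_cost E N q \<le> social_cost E N p" using A B unfolding social_cost_def by simp
qed

theorem mainTheorem2:
  fixes V :: "'v set" and E :: "('v \<times> 'v) set" and N :: nat
    and src dst :: "nat \<Rightarrow> 'v" and P :: "nat \<Rightarrow> 'v list set"
  assumes "routing_game V E N src dst P"
  shows "(\<nexists>r :: nat \<Rightarrow> nat \<Rightarrow> 'v list.
            is_routing N P (r 0) \<and> (\<forall>k. greedy_move N P (r k) (r (Suc k))))
       \<and> (\<forall>p. is_routing N P p \<and> (\<nexists>q. greedy_move N P p q) \<longrightarrow> nash_routing N P p)
       \<and> (\<exists>p. nash_routing N P p)
       \<and> (\<exists>p. nash_routing N P p \<and> (\<forall>q. is_routing N P q \<longrightarrow> social_cost E N p \<le> social_cost E N q))"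
proof -
  note G = assms
  have wf: "wf {(M :: nat multiset, N). M < N}" by (rule wf_less_multiset)
  have P1: "\<nexists>r :: nat \<Rightarrow> nat \<Rightarrow> 'v list.
            is_routing N P (r 0) \<and> (\<forall>k. greedy_move N P (r k) (r (Suc k)))"
  proof
    assume "\<exists>r :: nat \<Rightarrow> nat \<Rightarrow> 'v list.
            is_routing N P (r 0) \<and> (\<forall>k. greedy_move N P (r k) (r (Suc k)))"
    then obtain r :: "nat \<Rightarrow> nat \<Rightarrow> 'v list" where r0: "is_routing N P (r 0)"
      and rs: "\<forall>k. greedy_move N P (r k) (r (Suc k))" by blast
    have R: "is_routing N P (r k)" for k
      by (induction k) (use r0 rs move_pot(2)[OF G] in auto)
    have "\<forall>k. (pot E N (r (Suc k)), pot E N (r k)) \<in> {(M :: nat multiset, N). M < N}"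
      using move_pot(1)[OF G R rs[rule_format]] by auto
    hence "\<exists>f. \<forall>k. (f (Suc k), f k) \<in> {(M :: nat multiset, N). M < N}"
      by (rule exI[of _ "\<lambda>k. pot E N (r k)"])
    thus False using wf unfolding wf_iff_no_infinite_down_chain by blast
  qed
  have P2: "\<forall>p. is_routing N P p \<and> (\<nexists>q. greedy_move N P p q) \<longrightarrow> nash_routing N P p"
    unfolding nash_routing_def greedy_move_def by (metis not_le)
  define p00 where "p00 = (\<lambda>i. SOME x. x \<in> P i)"
  have "is_routing N P p00" unfolding is_routing_def p00_def
    using G unfolding routing_game_def by (auto intro: someI_ex simp: ex_in_conv[symmetric])
  then obtain p0 where p0: "is_routing N P p0"
    and p0min: "\<forall>q. is_routing N P q \<longrightarrow> social_cost E N p0 \<le> social_cost E N q"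
    using ex_has_least_nat[of "is_routing N P" p00 "social_cost E N"] by blast
  define T where "T = {p. is_routing N P p \<and> social_cost E N p \<le> social_cost E N p0}"
  have "pot E N p0 \<in> pot E N ` T" using p0 unfolding T_def by auto
  then obtain z where z: "z \<in> pot E N ` T"
    and zmin: "\<forall>y. (y, z) \<in> {(M :: nat multiset, N). M < N} \<longrightarrow> y \<notin> pot E N ` T"
    using wf unfolding wf_eq_minimal by metis
  then obtain p1 where p1: "p1 \<in> T" "z = pot E N p1" by blast
  have nash: "nash_routing N P p1"
  proof -
    have R1: "is_routing N P p1" using p1 unfolding T_def by auto
    have "\<nexists>q. greedy_move N P p1 q"
    proof
      assume "\<exists>q. greedy_move N P p1 q"
      then obtain q where mv: "greedy_move N P p1 q" by blast
      have "q \<in> T" using move_pot(2,3)[OF G R1 mv] p1 unfolding T_def by auto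
      moreover have "pot E N q < z" using move_pot(1)[OF G R1 mv] p1 by simp
      ultimately show False using zmin by auto
    qed
    thus ?thesis using P2 R1 by blast
  qed
  have opt: "\<forall>q. is_routing N P q \<longrightarrow> social_cost E N p1 \<le> social_cost E N q"
    using p1 p0min unfolding T_def by force
  show ?thesis using P1 P2 nash opt by blast
qed

end
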